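(* Let $(G,d)$ be a boundedly compact $p$-uniformly convex metric space with $p\in(1,\infty)$ and $c>0$, $\lambda>0$, and $f:G\to\mathbb{R}$ proper, lower semicontinuous and strongly convex with modulus $\mu\ge(2-c)/(p\lambda^{p-1})$. (i) If $x_+=\mathrm{prox}^p_{f,\lambda}(x)$, then $\frac{4}{cp\lambda^{p-1}}\Delta^{(p,c)}(x_+,x,x_+,y)\le f(y)-f(x_+)$ for all $y\in G$. (ii) For all $x,y\in G$, with $x_+=\mathrm{prox}^p_{f,\lambda}(x)$, $y_+=\mathrm{prox}^p_{f,\lambda}(y)$, $$d(x_+,y_+)^p\le d(x,y)^p-\frac{1-\alpha}{\alpha}\psi^{(p,c)}(x,y,x_+,y_+),\qquad\alpha=\frac{c}{2+c}.$$
   Context: $(G,d)$ uniquely geodesic; $(1-\tau)x\oplus\tau y$ is the point on the geodesic from $x$ to $y$ at distance $\tau d(x,y)$ from $x$. $p$-uniform convexity with constant $c$: $d(z,(1-\tau)x\oplus\tau y)^p\le(1-\tau)d(z,x)^p+\tau d(z,y)^p-\frac c2\tau(1-\tau)d(x,y)^p$. $f$ strongly convex with modulus $\mu$: $f((1-\tau)x\oplus\tau y)\le(1-\tau)f(x)+\tau f(y)-\frac\mu2(1-\tau)\tau d(x,y)^p$ for all $\tau\in[0,1]$, $x,y$. $\mathrm{prox}^p_{f,\lambda}(x)=\operatorname{argmin}_{y\in G}\{f(y)+\frac1{p\lambda^{p-1}}d(y,x)^p\}$. $\Delta^{(p,c)}(x,y,u,v)=\frac c4\big(d(x,v)^p+d(y,u)^p-d(x,u)^p-d(y,v)^p\big)$;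 $\psi^{(p,c)}(x,y,u,v)=\frac c2\big(d(x,u)^p+d(y,v)^p+d(u,v)^p+d(x,y)^p-d(y,u)^p-d(x,v)^p\big)$. *)

theory Defs
  imports "HOL-Analysis.Analysis"
begin

definition geodesic_path :: "'a::metric_space \<Rightarrow> 'a \<Rightarrow> (real \<Rightarrow> 'a) \<Rightarrow> bool" where
  "geodesic_path x y \<gamma> \<longleftrightarrow> \<gamma> 0 = x \<and> \<gamma> 1 = y \<and>
     (\<forall>s\<in>{0..1}. \<forall>t\<in>{0..1}. dist (\<gamma> s) (\<gamma> t) = \<bar>s - t\<bar> * dist x y)"

definition uniquely_geodesic :: "'a::metric_space itself \<Rightarrow> bool" where
  "uniquely_geodesic _ \<longleftrightarrow> (\<forall>x y::'a. (\<exists>\<gamma>. geodesic_path x y \<gamma>) \<and>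
     (\<forall>\<gamma> \<gamma>'. geodesic_path x y \<gamma> \<longrightarrow> geodesic_path x y \<gamma>' \<longrightarrow> (\<forall>t\<in>{0..1}. \<gamma> t = \<gamma>' t)))"

text \<open>geo x y t = (1-t) x \<oplus> t y: the point on the geodesic from x to y at distance t d(x,y) from x.\<close>
definition geo :: "'a::metric_space \<Rightarrow> 'a \<Rightarrow> real \<Rightarrow> 'a" where
  "geo x y t = (THE z. \<exists>\<gamma>. geodesic_path x y \<gamma> \<and> \<gamma> t = z)"

definition p_uniformly_convex :: "'a::metric_space itself \<Rightarrow> real \<Rightarrow> real \<Rightarrow> bool" where
  "p_uniformly_convex T p c \<longleftrightarrow> uniquely_geodesic T \<and>
     (\<forall>x y z::'a. \<forall>\<tau>\<in>{0..1}.
        dist z (geo x y \<tau>) powr p \<le> (1 - \<tau>) * dist z x powr p + \<tau> * dist z y powr p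
          - c / 2 * \<tau> * (1 - \<tau>) * dist x y powr p)"

definition boundedly_compact :: "'a::metric_space itself \<Rightarrow> bool" where
  "boundedly_compact _ \<longleftrightarrow> (\<forall>S::'a set. bounded S \<and> closed S \<longrightarrow> compact S)"

definition lower_semicont :: "('a::topological_space \<Rightarrow> real) \<Rightarrow> bool" where
  "lower_semicont f \<longleftrightarrow> (\<forall>t. closed {x. f x \<le> t})"

definition strongly_convex :: "('a::metric_space \<Rightarrow> real) \<Rightarrow> real \<Rightarrow> real \<Rightarrow> bool" where
  "strongly_convex f p \<mu> \<longleftrightarrow> (\<forall>x y. \<forall>\<tau>\<in>{0..1}.
     f (geo x y \<tau>) \<le> (1 - \<tau>) * f x + \<tau> * f y - \<mu> / 2 * (1 - \<tau>) * \<tau> * dist x y powr p)"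

definition prox :: "real \<Rightarrow> ('a::metric_space \<Rightarrow> real) \<Rightarrow> real \<Rightarrow> 'a \<Rightarrow> 'a" where
  "prox p f lam x = (THE y. is_arg_min (\<lambda>y. f y + 1 / (p * lam powr (p - 1)) * dist y x powr p) (\<lambda>_. True) y)"

definition Delta :: "real \<Rightarrow> real \<Rightarrow> 'a::metric_space \<Rightarrow> 'a \<Rightarrow> 'a \<Rightarrow> 'a \<Rightarrow> real" where
  "Delta p c x y u v = c / 4 * (dist x v powr p + dist y u powr p - dist x u powr p - dist y v powr p)"

definition psi :: "real \<Rightarrow> real \<Rightarrow> 'a::metric_space \<Rightarrow> 'a \<Rightarrow> 'a \<Rightarrow> 'a \<Rightarrow> real" where
  "psi p c x y u v = c / 2 * (dist x u powr p + dist y v powr p + dist u v powr p + dist x y powr p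
      - dist y u powr p - dist x v powr p)"

end

theory Submission imports Defs begin

lemma lsc_min:
  fixes g :: "'a::metric_space \<Rightarrow> real"
  assumes lsc: "\<And>t. closed {x. g x \<le> t}" and K: "compact K" "K \<noteq> {}"
  shows "\<exists>y\<in>K. \<forall>z\<in>K. g y \<le> g z"
proof -
  have "K \<inter> (\<Inter>i\<in>g ` K. {x. g x \<le> i}) \<noteq> {}"
  proof (rule compact_imp_fip_image[OF K(1)])
    fix i assume "i \<in> g ` K" show "closed {x. g x \<le> i}" by (rule lsc)
  next
    fix I' assume I': "finite I'" "I' \<subseteq> g ` K"
    show "K \<inter> (\<Inter>i\<in>I'. {x. g x \<le> i}) \<noteq> {}"
    proof (cases "I' = {}")
      case True then show ?thesis using K(2) by auto
    next
      case False
      then have "Min I' \<in> I'" using I' by auto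
      then obtain z where z: "z \<in> K" "g z = Min I'" using I' by auto
      have "z \<in> K \<inter> (\<Inter>i\<in>I'. {x. g x \<le> i})" using z I' by auto
      then show ?thesis by blast
    qed
  qed
  then show ?thesis by blast
qed

lemma lsc_add:
  fixes f h :: "'a::metric_space \<Rightarrow> real"
  assumes lsc: "\<And>t. closed {x. f x \<le> t}" and h: "continuous_on UNIV h"
  shows "closed {x. f x + h x \<le> t}"
proof -
  have eq: "{x. f x + h x > t} = (\<Union>s. {x. f x > s} \<inter> {x. h x > t - s})"
  proof (rule set_eqI, rule iffI)
    fix x assume "x \<in> {x. f x + h x > t}"
    then have "f x > (f x + t - h x)/2" "h x > t - (f x + t - h x)/2" by (auto simp: field_simps)
    then show "x \<in> (\<Union>s. {x. f x > s} \<inter> {x. h x > t - s})" by blast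
  qed auto
  have "open {x. f x > s}" for s
  proof -
    have "{x. f x > s} = - {x. f x \<le> s}" by auto
    then show ?thesis using lsc by (simp add: open_Compl)
  qed
  moreover have "open {x. h x > t - s}" for s
    by (rule open_Collect_less[OF continuous_on_const h])
  ultimately have "open {x. f x + h x > t}" unfolding eq by (intro open_UN) auto
  moreover have "{x. f x + h x \<le> t} = - {x. f x + h x > t}" by auto
  ultimately show ?thesis by (simp add: closed_Compl)
qed

lemma cont_distp:
  fixes x :: "'a::metric_space"
  assumes "p > 0"
  shows "continuous_on UNIV (\<lambda>y. K * dist y x powr p)"
proof -
  have "continuous_on UNIV (\<lambda>y. dist y x)" by (rule continuous_on_dist[OF continuous_on_id continuous_on_const])
  then have "continuous_on UNIV (\<lambda>y. dist y x powr p)"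
    by (rule continuous_on_powr'[OF _ continuous_on_const]) (auto simp: assms)
  then show ?thesis by (rule continuous_on_mult_left)
qed

lemma geo_dist:
  fixes x y :: "'a::metric_space"
  assumes "uniquely_geodesic TYPE('a)" "t \<in> {0..1}"
  shows "dist x (geo x y t) = t * dist x y"
proof -
  obtain \<gamma> where g: "geodesic_path x y \<gamma>" using assms(1) unfolding uniquely_geodesic_def by blast
  define P where "P = (\<lambda>z. \<exists>\<gamma>'. geodesic_path x y \<gamma>' \<and> \<gamma>' t = z)"
  have E: "P (\<gamma> t)" unfolding P_def using g by blast
  have U: "z = \<gamma> t" if Pz: "P z" for z
  proof -
    obtain \<gamma>' where g': "geodesic_path x y \<gamma>'" "\<gamma>' t = z" using Pz unfolding P_def by blast
    have "\<forall>s\<in>{0..1}. \<gamma>' s = \<gamma> s" using assms(1) g g'(1) unfolding uniquely_geodesic_def by blast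
    then have gt: "\<gamma>' t = \<gamma> t" using assms(2) by blast
    show "z = \<gamma> t" by (rule trans[OF sym[OF g'(2)] gt])
  qed
  have "(THE z. P z) = \<gamma> t" by (rule the_equality[of P, OF E U])
  then have ge: "geo x y t = \<gamma> t" unfolding geo_def P_def .
  have all: "\<forall>s\<in>{0..1}. \<forall>r\<in>{0..1}. dist (\<gamma> s) (\<gamma> r) = \<bar>s - r\<bar> * dist x y"
    using g unfolding geodesic_path_def by blast
  have z01: "(0::real) \<in> {0..1}" by simp
  have d: "dist (\<gamma> 0) (\<gamma> t) = \<bar>0 - t\<bar> * dist x y" by (rule bspec[OF bspec[OF all z01] assms(2)])
  have g0: "\<gamma> 0 = x" using g unfolding geodesic_path_def by simp
  have "\<bar>0 - t\<bar> = t" using assms(2) by simp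
  then show ?thesis using d unfolding ge g0 by simp
qed

lemma growth:
  fixes g :: "'a::metric_space \<Rightarrow> real"
  assumes sc: "\<And>a b \<tau>. \<tau> \<in> {0..1} \<Longrightarrow> g (geo a b \<tau>) \<le> (1-\<tau>) * g a + \<tau> * g b - \<nu>/2*(1-\<tau>)*\<tau>*dist a b powr p"
    and nu: "\<nu> > 0" and m: "\<And>z. g m \<le> g z"
  shows "g y \<ge> g m + \<nu>/2 * dist m y powr p"
proof (rule ccontr)
  define D where "D = dist m y powr p"
  assume "\<not> ?thesis"
  then have lt: "g y - g m < \<nu>/2 * D" unfolding D_def by linarith
  define \<delta> where "\<delta> = \<nu>/2 * D - (g y - g m)"
  have dpos: "\<delta> > 0" using lt unfolding \<delta>_def by linarith
  have ge: "g y - g m \<ge> 0" using m[of y] by linarith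
  have D0: "D \<ge> 0" unfolding D_def by (rule powr_ge_zero)
  have Dpos: "D > 0"
  proof (rule ccontr)
    assume "\<not> D > 0"
    then have "D = 0" using D0 by linarith
    then show False using lt ge by simp
  qed
  have nD: "\<nu>*D > 0" using nu Dpos by (rule mult_pos_pos)
  have q0: "\<delta>/(\<nu>*D) > 0" using dpos nD by (rule divide_pos_pos)
  define \<tau> where "\<tau> = min (1/2) (\<delta>/(\<nu>*D))"
  have tpos: "\<tau> > 0" unfolding \<tau>_def using q0 by simp
  have tle: "\<tau> \<le> 1/2" unfolding \<tau>_def by (rule min.cobounded1)
  have tle3: "\<tau> \<le> \<delta>/(\<nu>*D)" unfolding \<tau>_def by (rule min.cobounded2)
  have tle2: "\<tau> * (\<nu>*D) \<le> \<delta>" using tle3 nD by (simp add: pos_le_divide_eq)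
  have t01: "\<tau> \<in> {0..1}" using tpos tle by simp
  have "g m \<le> g (geo m y \<tau>)" by (rule m)
  also have "\<dots> \<le> (1-\<tau>) * g m + \<tau> * g y - \<nu>/2*(1-\<tau>)*\<tau>*D"
    unfolding D_def by (rule sc[OF t01])
  also have "\<dots> = g m + \<tau> * (g y - g m) - \<tau> * (\<nu>/2*(1-\<tau>)*D)"
    by (simp add: algebra_simps)
  finally have "\<tau> * (\<nu>/2*(1-\<tau>)*D) \<le> \<tau> * (g y - g m)" by linarith
  then have "\<nu>/2*(1-\<tau>)*D \<le> g y - g m" using tpos by (simp add: mult_le_cancel_left_pos)
  moreover have "\<nu>/2*(1-\<tau>)*D = \<nu>/2*D - (\<tau>*(\<nu>*D))/2" by (simp add: field_simps)
  moreover have "\<tau>*(\<nu>*D) > 0" using tpos nD by (rule mult_pos_pos)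
  ultimately show False using tle2 lt unfolding \<delta>_def by linarith
qed

lemma prox_growth:
  fixes f :: "'a::metric_space \<Rightarrow> real" and p c lam \<mu> :: real
  assumes p1: "p > 1" and c0: "c > 0" and lam0: "lam > 0"
    and uc: "p_uniformly_convex TYPE('a) p c"
    and bc: "boundedly_compact TYPE('a)"
    and lsc: "lower_semicont f"
    and scf: "strongly_convex f p \<mu>"
    and mu: "\<mu> \<ge> (2 - c) / (p * lam powr (p - 1))"
  shows "f y + 1 / (p * lam powr (p - 1)) * dist y x powr p \<ge>
     f (prox p f lam x) + 1 / (p * lam powr (p - 1)) * dist (prox p f lam x) x powr p
      + 1 / (p * lam powr (p - 1)) * dist (prox p f lam x) y powr p"
proof -
  define K where "K = 1 / (p * lam powr (p - 1))"
  define g where "g = (\<lambda>y. f y + K * dist y x powr p)"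
  define \<nu> where "\<nu> = \<mu> + c * K"
  have K0: "K > 0" unfolding K_def using p1 lam0 by auto
  have "(2 - c) / (p * lam powr (p - 1)) = (2 - c) * K" unfolding K_def by simp
  then have nuK: "\<nu> \<ge> 2 * K" using mu unfolding \<nu>_def by (simp add: algebra_simps)
  have nu0: "\<nu> > 0" using nuK K0 by auto
  have ug: "uniquely_geodesic TYPE('a)" using uc unfolding p_uniformly_convex_def by auto
  have sc: "g (geo a b \<tau>) \<le> (1-\<tau>) * g a + \<tau> * g b - \<nu>/2*(1-\<tau>)*\<tau>*dist a b powr p"
    if t: "\<tau> \<in> {0..1}" for a b \<tau>
  proof -
    have f1: "f (geo a b \<tau>) \<le> (1 - \<tau>) * f a + \<tau> * f b - \<mu> / 2 * (1 - \<tau>) * \<tau> * dist a b powr p"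
      using scf t unfolding strongly_convex_def by blast
    have d1: "dist x (geo a b \<tau>) powr p \<le> (1 - \<tau>) * dist x a powr p + \<tau> * dist x b powr p
          - c / 2 * \<tau> * (1 - \<tau>) * dist a b powr p"
      using uc t unfolding p_uniformly_convex_def by blast
    have "K * dist x (geo a b \<tau>) powr p \<le> K * ((1 - \<tau>) * dist x a powr p + \<tau> * dist x b powr p
          - c / 2 * \<tau> * (1 - \<tau>) * dist a b powr p)"
      using d1 K0 by (intro mult_left_mono) auto
    then have "K * dist x (geo a b \<tau>) powr p \<le> (1 - \<tau>) * (K * dist x a powr p) + \<tau> * (K * dist x b powr p)
          - c * K / 2 * (1 - \<tau>) * \<tau> * dist a b powr p" by (simp add: algebra_simps)
    moreover have eqs: "g (geo a b \<tau>) = f (geo a b \<tau>) + K * dist x (geo a b \<tau>) powr p"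
      "g a = f a + K * dist x a powr p" "g b = f b + K * dist x b powr p"
      by (simp_all add: g_def dist_commute)
    moreover have "(1-\<tau>) * (f a + K * dist x a powr p) + \<tau> * (f b + K * dist x b powr p) - \<nu>/2*(1-\<tau>)*\<tau>*dist a b powr p
       = ((1 - \<tau>) * f a + \<tau> * f b - \<mu> / 2 * (1 - \<tau>) * \<tau> * dist a b powr p)
        + ((1 - \<tau>) * (K * dist x a powr p) + \<tau> * (K * dist x b powr p)
          - c * K / 2 * (1 - \<tau>) * \<tau> * dist a b powr p)" unfolding \<nu>_def by (simp add: field_simps)
    ultimately show ?thesis using f1 by (simp only: eqs)
  qed
  have lscg: "closed {y. g y \<le> t}" for t
    unfolding g_def
    by (rule lsc_add) (use lsc p1 cont_distp[of p K x] in \<open>auto simp: lower_semicont_def\<close>)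
  have cpt: "compact S" if "bounded S" "closed S" for S :: "'a set"
    using bc that unfolding boundedly_compact_def by auto
  obtain y1 where y1: "y1 \<in> cball x 1" "\<And>z. z \<in> cball x 1 \<Longrightarrow> g y1 \<le> g z"
    using lsc_min[of g "cball x 1", OF lscg] cpt[of "cball x 1"] by fastforce
  define m1 where "m1 = g y1"
  define M where "M = 4 * (g x - m1) / \<nu>"
  define R where "R = max 2 (M powr (1/(p-1)))"
  have coer: "dist x y \<le> R" if gy: "g y \<le> g x" for y
  proof (cases "dist x y \<le> 2")
    case True then show ?thesis unfolding R_def by auto
  next
    case False
    define d where "d = dist x y"
    define D where "D = d powr p"
    define \<tau> where "\<tau> = 1 / d"
    have d2: "d > 2" using False unfolding d_def by auto
    have t01: "\<tau> \<in> {0..1}" "\<tau> \<le> 1/2" unfolding \<tau>_def using d2 by auto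
    define z where "z = geo x y \<tau>"
    have "dist x z = \<tau> * d" unfolding z_def d_def by (rule geo_dist[OF ug t01(1)])
    then have "dist x z = 1" using d2 unfolding \<tau>_def by simp
    then have gz: "g z \<ge> m1" unfolding m1_def using y1 by auto
    have "g z \<le> (1-\<tau>) * g x + \<tau> * g y - \<nu>/2*(1-\<tau>)*\<tau>*D"
      using sc[OF t01(1)] unfolding z_def D_def d_def by auto
    moreover have "\<tau> * g y \<le> \<tau> * g x" using gy t01 by (intro mult_left_mono) auto
    ultimately have "\<nu>/2*(1-\<tau>)*\<tau>*D \<le> g x - m1" using gz by (simp add: algebra_simps)
    moreover have "\<nu>/4*\<tau>*D \<le> \<nu>/2*(1-\<tau>)*\<tau>*D"
    proof -
      have "0 \<le> \<nu>/2*\<tau>*D" using nu0 t01 unfolding D_def by auto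
      then have "(\<nu>/2*\<tau>*D) * (1/2) \<le> (\<nu>/2*\<tau>*D) * (1-\<tau>)" using t01 by (intro mult_left_mono) auto
      then show ?thesis by (simp add: algebra_simps)
    qed
    ultimately have "\<nu>/4*\<tau>*D \<le> g x - m1" by linarith
    then have "\<tau>*D \<le> M" unfolding M_def using nu0 by (simp add: field_simps)
    moreover have "\<tau>*D = d powr (p-1)" unfolding \<tau>_def D_def using d2
      by (simp add: powr_diff)
    ultimately have "d powr (p-1) \<le> M" by simp
    then have "(d powr (p-1)) powr (1/(p-1)) \<le> M powr (1/(p-1))"
      using p1 d2 by (intro powr_mono2) auto
    moreover have "(d powr (p-1)) powr (1/(p-1)) = d" using p1 d2 by (simp add: powr_powr)
    ultimately show ?thesis unfolding R_def d_def by auto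
  qed
  define S where "S = {y. g y \<le> g x}"
  have "S \<subseteq> cball x R" using coer unfolding S_def by auto
  then have "bounded S" using bounded_subset bounded_cball by blast
  moreover have "closed S" unfolding S_def by (rule lscg)
  ultimately have "compact S" by (rule cpt)
  then obtain ys where ys: "ys \<in> S" "\<And>z. z \<in> S \<Longrightarrow> g ys \<le> g z"
    using lsc_min[of g S, OF lscg] unfolding S_def by fastforce
  have ysmin: "g ys \<le> g z" for z
  proof (cases "z \<in> S")
    case True then show ?thesis using ys(2) by auto
  next
    case False then have "g z > g x" unfolding S_def by auto
    moreover have "g ys \<le> g x" using ys(1) unfolding S_def by auto
    ultimately show ?thesis by auto
  qed
  have pe: "prox p f lam x = ys"
    unfolding prox_def
  proof (rule the_equality)
    show "is_arg_min (\<lambda>y. f y + 1 / (p * lam powr (p - 1)) * dist y x powr p) (\<lambda>_. True) ys"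
      using ysmin unfolding is_arg_min_def g_def K_def by (auto simp: not_less)
  next
    fix y' assume "is_arg_min (\<lambda>y. f y + 1 / (p * lam powr (p - 1)) * dist y x powr p) (\<lambda>_. True) y'"
    then have y'min: "g y' \<le> g z" for z unfolding is_arg_min_def g_def K_def by (auto simp: not_less)
    have "g y' \<ge> g ys + \<nu>/2 * dist ys y' powr p" by (rule growth[OF sc nu0 ysmin]) auto
    moreover have "g y' \<le> g ys" by (rule y'min)
    ultimately have "\<nu>/2 * dist ys y' powr p \<le> 0" by simp
    then have "dist ys y' powr p \<le> 0" using nu0 by (simp add: mult_le_0_iff)
    then have "dist ys y' powr p = 0" using powr_ge_zero[of "dist ys y'" p] by linarith
    then show "y' = ys" by simp
  qed
  moreover have "g y \<ge> g ys + \<nu>/2 * dist ys y powr p" by (rule growth[OF sc nu0 ysmin]) auto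
  moreover have "K * dist ys y powr p \<le> \<nu>/2 * dist ys y powr p"
    using nuK by (intro mult_right_mono) auto
  ultimately have "g y \<ge> g ys + K * dist ys y powr p" by linarith
  moreover have "g y = f y + K * dist y x powr p" "g ys = f ys + K * dist ys x powr p"
    unfolding g_def by simp_all
  ultimately have "f y + K * dist y x powr p \<ge> f ys + K * dist ys x powr p + K * dist ys y powr p"
    by linarith
  then show ?thesis unfolding pe K_def .
qed


theorem mainTheorem13:
  fixes f :: "'a::metric_space \<Rightarrow> real" and p c lam \<mu> :: real
  assumes "p > 1" and "c > 0" and "lam > 0"
    and "p_uniformly_convex TYPE('a) p c"
    and "boundedly_compact TYPE('a)"
    and "lower_semicont f"
    and "strongly_convex f p \<mu>"
    and "\<mu> \<ge> (2 - c) / (p * lam powr (p - 1))"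
  shows "(\<forall>x y. 4 / (c * p * lam powr (p - 1)) * Delta p c (prox p f lam x) x (prox p f lam x) y
              \<le> f y - f (prox p f lam x))
       \<and> (\<forall>x y. let \<alpha> = c / (2 + c) in
              dist (prox p f lam x) (prox p f lam y) powr p
                \<le> dist x y powr p - (1 - \<alpha>) / \<alpha> * psi p c x y (prox p f lam x) (prox p f lam y))"
proof -
  define K where "K = 1 / (p * lam powr (p - 1))"
  have K0: "K > 0" unfolding K_def using assms by auto
  have G: "f y + K * dist y x powr p \<ge>
     f (prox p f lam x) + K * dist (prox p f lam x) x powr p + K * dist (prox p f lam x) y powr p" for x y
    unfolding K_def by (rule prox_growth[OF assms])
  have h4: "4 / (c*p*lam powr (p - 1)) * (c/4 * X) = K * X" for X
    unfolding K_def using assms by (simp add: field_simps)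
  have G2: "K * (dist xp y powr p + dist x xp powr p - dist x y powr p) \<le> f y - f xp"
    if xp: "xp = prox p f lam x" for x y xp
  proof -
    have "f y + K * dist x y powr p \<ge> f xp + K * dist x xp powr p + K * dist xp y powr p"
      using G[of x y] unfolding xp by (simp add: dist_commute)
    moreover have "K * (dist xp y powr p + dist x xp powr p - dist x y powr p)
       = K * dist xp y powr p + K * dist x xp powr p - K * dist x y powr p"
      by (simp add: algebra_simps)
    ultimately show ?thesis by linarith
  qed
  have part1: "4 / (c * p * lam powr (p - 1)) * Delta p c (prox p f lam x) x (prox p f lam x) y
              \<le> f y - f (prox p f lam x)" for x y
  proof -
    have De: "Delta p c (prox p f lam x) x (prox p f lam x) y = c / 4 *
       (dist (prox p f lam x) y powr p + dist x (prox p f lam x) powr p - dist x y powr p)"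
      unfolding Delta_def by simp
    show ?thesis unfolding De h4 by (rule G2[OF refl])
  qed
  have a: "(1 - c / (2 + c)) / (c / (2 + c)) = 2 / c"
  proof -
    have a0: "1 - c / (2 + c) = 2 / (2 + c)" using assms(2) by (simp add: field_simps)
    show ?thesis unfolding a0 using assms(2) by (simp add: divide_simps)
  qed
  have b: "2 / c * (c / 2 * X) = X" for X using assms(2) by simp
  have part2: "dist (prox p f lam x) (prox p f lam y) powr p
                \<le> dist x y powr p - (1 - c / (2 + c)) / (c / (2 + c)) * psi p c x y (prox p f lam x) (prox p f lam y)" for x y
  proof -
    define xp where "xp = prox p f lam x"
    define yp where "yp = prox p f lam y"
    have e: "(1 - c / (2 + c)) / (c / (2 + c)) * psi p c x y xp yp
      = dist x xp powr p + dist y yp powr p + dist xp yp powr p + dist x y powr p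
      - dist y xp powr p - dist x yp powr p"
      unfolding a psi_def b by (rule refl)
    have g1: "K * (dist xp yp powr p + dist x xp powr p - dist x yp powr p) \<le> f yp - f xp"
      by (rule G2) (simp add: xp_def)
    have g2: "K * (dist yp xp powr p + dist y yp powr p - dist y xp powr p) \<le> f xp - f yp"
      by (rule G2) (simp add: yp_def)
    have "K * (dist xp yp powr p + dist x xp powr p - dist x yp powr p)
      + K * (dist yp xp powr p + dist y yp powr p - dist y xp powr p) \<le> 0"
      using g1 g2 by linarith
    then have "K * ((dist xp yp powr p + dist x xp powr p - dist x yp powr p)
      + (dist yp xp powr p + dist y yp powr p - dist y xp powr p)) \<le> 0"
      by (simp only: distrib_left)
    then have "(dist xp yp powr p + dist x xp powr p - dist x yp powr p)
      + (dist yp xp powr p + dist y yp powr p - dist y xp powr p) \<le> 0"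
      using K0 by (simp add: mult_le_0_iff)
    moreover have "dist yp xp powr p = dist xp yp powr p" by (simp add: dist_commute)
    ultimately show ?thesis unfolding xp_def[symmetric] yp_def[symmetric] e by linarith
  qed
  show ?thesis unfolding Let_def using part1 part2 by blast
qed

end
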